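(* Let $k$ be a field, let $A$ be a $k$-algebra and let $K/k$ be a field extension. If $A\otimes_k K$ is just infinite over $K$, then $A$ is just infinite over $k$.
   Context: All rings are associative unital algebras over a field. A $k$-algebra $A$ is called just infinite if $\dim_k(A)=\infty$ and every nonzero two-sided ideal of $A$ has finite codimension in $A$. *)

theory Defs
  imports Complex_Main
begin

definition algebra_over :: "('k::field \<Rightarrow> 'a::ring_1 \<Rightarrow> 'a) \<Rightarrow> bool" where
  "algebra_over s \<longleftrightarrow> vector_space s \<and>
     (\<forall>c x y. s c (x * y) = s c x * y \<and> s c (x * y) = x * s c y)"

definition two_sided_ideal :: "'a::ring_1 set \<Rightarrow> bool" where
  "two_sided_ideal I \<longleftrightarrow> 0 \<in> I \<and> (\<forall>x\<in>I. \<forall>y\<in>I. x + y \<in> I) \<and> (\<forall>x\<in>I. - x \<in> I) \<and>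
     (\<forall>x\<in>I. \<forall>a. a * x \<in> I \<and> x * a \<in> I)"

definition fin_dim :: "('k::field \<Rightarrow> 'a::ring_1 \<Rightarrow> 'a) \<Rightarrow> bool" where
  "fin_dim s \<longleftrightarrow> (\<exists>B. finite B \<and> module.span s B = UNIV)"

text \<open>Finite codimension of a subset I: the quotient A/I is spanned by
  the image of a finite set, i.e. finitely many elements together with I span A.\<close>
definition fin_codim :: "('k::field \<Rightarrow> 'a::ring_1 \<Rightarrow> 'a) \<Rightarrow> 'a set \<Rightarrow> bool" where
  "fin_codim s I \<longleftrightarrow> (\<exists>B. finite B \<and> module.span s (B \<union> I) = UNIV)"

definition just_infinite :: "('k::field \<Rightarrow> 'a::ring_1 \<Rightarrow> 'a) \<Rightarrow> bool" where
  "just_infinite s \<longleftrightarrow> algebra_over s \<and> \<not> fin_dim s \<and>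
     (\<forall>I. two_sided_ideal I \<and> I \<noteq> {0} \<longrightarrow> fin_codim s I)"

text \<open>A field extension K/k, given by a (necessarily injective) ring hom k \<rightarrow> K.\<close>
definition field_ext :: "('k::field \<Rightarrow> 'K::field) \<Rightarrow> bool" where
  "field_ext \<sigma> \<longleftrightarrow> \<sigma> 1 = 1 \<and> (\<forall>x y. \<sigma> (x + y) = \<sigma> x + \<sigma> y \<and> \<sigma> (x * y) = \<sigma> x * \<sigma> y)"

text \<open>(T, sT, \<iota>) is the scalar extension A \<otimes>_k K of the k-algebra (A, sA):
  T is a K-algebra, \<iota> : A \<rightarrow> T is a unital ring hom that is k-linear
  (K acting via \<sigma>), \<iota>(A) spans T over K, and \<iota> maps k-linearly independent
  sets injectively onto K-linearly independent sets.  Equivalently, the induced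
  K-algebra map A \<otimes>_k K \<rightarrow> T, a \<otimes> \<lambda> \<mapsto> \<lambda> \<iota>(a), is an isomorphism.\<close>
definition is_base_change ::
  "('k::field \<Rightarrow> 'K::field) \<Rightarrow> ('k \<Rightarrow> 'a::ring_1 \<Rightarrow> 'a) \<Rightarrow> ('K \<Rightarrow> 't::ring_1 \<Rightarrow> 't)
     \<Rightarrow> ('a \<Rightarrow> 't) \<Rightarrow> bool" where
  "is_base_change \<sigma> sA sT \<iota> \<longleftrightarrow> algebra_over sA \<and> algebra_over sT \<and>
     \<iota> 1 = 1 \<and> (\<forall>x y. \<iota> (x + y) = \<iota> x + \<iota> y \<and> \<iota> (x * y) = \<iota> x * \<iota> y) \<and>
     (\<forall>c x. \<iota> (sA c x) = sT (\<sigma> c) (\<iota> x)) \<and>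
     module.span sT (range \<iota>) = UNIV \<and>
     (\<forall>S. \<not> module.dependent sA S \<longrightarrow> inj_on \<iota> S \<and> \<not> module.dependent sT (\<iota> ` S))"

end

theory Submission
  imports Defs
begin

context module
begin

lemma span_le_span: "S \<subseteq> span T \<Longrightarrow> span S \<subseteq> span T"
  by (metis span_mono span_span)

lemma span_finite_support: "x \<in> span S \<Longrightarrow> \<exists>F. finite F \<and> F \<subseteq> S \<and> x \<in> span F"
proof (induction rule: span_induct_alt)
  case base
  show ?case by (rule exI[of _ "{}"]) (simp add: span_zero)
next
  case (step c x y)
  then obtain F where F: "finite F" "F \<subseteq> S" "y \<in> span F" by blast
  have "c *s x + y \<in> span (insert x F)"
  proof (rule span_add)
    show "c *s x \<in> span (insert x F)" by (intro span_scale span_base) simp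
    show "y \<in> span (insert x F)" using F(3) span_mono[of F "insert x F"] by blast
  qed
  moreover have "finite (insert x F)" using F(1) by simp
  moreover have "insert x F \<subseteq> S" using F(2) step(1) by simp
  ultimately show ?case by blast
qed

lemma finite_set_span_support:
  "finite X \<Longrightarrow> X \<subseteq> span S \<Longrightarrow> \<exists>F. finite F \<and> F \<subseteq> S \<and> X \<subseteq> span F"
proof (induction X rule: finite_induct)
  case empty
  show ?case by (rule exI[of _ "{}"]) simp
next
  case (insert x X)
  have "X \<subseteq> span S" "x \<in> span S" using insert.prems by simp_all
  from insert.IH[OF this(1)] obtain F where F: "finite F" "F \<subseteq> S" "X \<subseteq> span F" by (elim exE conjE)
  from span_finite_support[OF \<open>x \<in> span S\<close>] obtain G where G: "finite G" "G \<subseteq> S" "x \<in> span G"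
    by (elim exE conjE)
  have "span F \<subseteq> span (F \<union> G)" "span G \<subseteq> span (F \<union> G)"
    by (simp_all add: span_mono)
  then have "insert x X \<subseteq> span (F \<union> G)"
    using F(3) G(3) by blast
  moreover have "finite (F \<union> G)" using F(1) G(1) by simp
  moreover have "F \<union> G \<subseteq> S" using F(2) G(2) by simp
  ultimately show ?case by blast
qed

end

theorem lemma5p2:
  fixes \<sigma> :: "'k::field \<Rightarrow> 'K::field"
    and sA :: "'k \<Rightarrow> 'a::ring_1 \<Rightarrow> 'a"
    and sT :: "'K \<Rightarrow> 't::ring_1 \<Rightarrow> 't"
    and \<iota> :: "'a \<Rightarrow> 't"
  assumes "field_ext \<sigma>"
    and "algebra_over sA"
    and "is_base_change \<sigma> sA sT \<iota>"
    and "just_infinite sT"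
  shows "just_infinite sA"
proof -
  have vA: "vector_space sA"
    using assms(2) unfolding algebra_over_def by simp
  have mA0: "\<forall>c x y. sA c (x * y) = sA c x * y \<and> sA c (x * y) = x * sA c y"
    using assms(2) unfolding algebra_over_def by (rule conjunct2)
  have mA: "\<And>c x y. sA c (x * y) = sA c x * y \<and> sA c (x * y) = x * sA c y"
    using mA0 by blast
  have vT: "vector_space sT"
    using assms(3) unfolding is_base_change_def algebra_over_def by simp
  have "algebra_over sT" using assms(3) unfolding is_base_change_def by simp
  then have mT0: "\<forall>c x y. sT c (x * y) = sT c x * y \<and> sT c (x * y) = x * sT c y"
    unfolding algebra_over_def by (rule conjunct2)
  have mT: "\<And>c x y. sT c (x * y) = sT c x * y \<and> sT c (x * y) = x * sT c y"
    using mT0 by blast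
  have mT1: "\<And>c x y. sT c x * y = sT c (x * y)" and mT2: "\<And>c x y. x * sT c y = sT c (x * y)"
    using mT by (metis, metis)
  interpret A: vector_space sA by (rule vA)
  interpret T: vector_space sT by (rule vT)
  have iadd: "\<And>x y. \<iota> (x + y) = \<iota> x + \<iota> y" and imul: "\<And>x y. \<iota> (x * y) = \<iota> x * \<iota> y"
    and iscale: "\<And>c x. \<iota> (sA c x) = sT (\<sigma> c) (\<iota> x)"
    and ispan: "T.span (range \<iota>) = UNIV"
    and iind: "\<And>S. A.independent S \<Longrightarrow> inj_on \<iota> S \<and> T.independent (\<iota> ` S)"
    using assms(3) unfolding is_base_change_def by auto
  have i0: "\<iota> 0 = 0" using iadd[of 0 0] by simp
  have L1: "\<iota> x \<in> T.span (\<iota> ` X)" if "x \<in> A.span X" for x X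
    using that
  proof (induction rule: A.span_induct_alt)
    case base
    then show ?case by (simp add: i0 T.span_zero)
  next
    case (step c x y)
    then show ?case
      by (simp add: iadd iscale T.span_add T.span_scale T.span_base)
  qed
  have L1': "\<iota> ` A.span X \<subseteq> T.span (\<iota> ` X)" for X using L1 by auto
  have Tnf: "\<not> fin_dim sT" and Tid: "\<And>I. two_sided_ideal I \<Longrightarrow> I \<noteq> {0} \<Longrightarrow> fin_codim sT I"
    using assms(4) unfolding just_infinite_def by auto
  have nfA: "\<not> fin_dim sA"
  proof
    assume "fin_dim sA"
    then obtain B where B: "finite B" "A.span B = UNIV" unfolding fin_dim_def by auto
    have "range \<iota> \<subseteq> T.span (\<iota> ` B)" using L1'[of B] B(2) by simp
    then have "T.span (range \<iota>) \<subseteq> T.span (\<iota> ` B)" by (rule T.span_le_span)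
    then have "T.span (\<iota> ` B) = UNIV" using ispan by auto
    then have "fin_dim sT" unfolding fin_dim_def using B(1) by blast
    then show False using Tnf by simp
  qed
  have codim: "fin_codim sA I" if I: "two_sided_ideal I" "I \<noteq> {0}" for I
  proof -
    have I0: "0 \<in> I" and Iadd: "\<And>x y. x \<in> I \<Longrightarrow> y \<in> I \<Longrightarrow> x + y \<in> I"
      and Imul: "\<And>x a. x \<in> I \<Longrightarrow> a * x \<in> I \<and> x * a \<in> I"
      using I(1) unfolding two_sided_ideal_def by auto
    define J where "J = T.span (\<iota> ` I)"
    have Jl0: "\<iota> a0 * x \<in> J" if "x \<in> J" for a0 x
      using that[unfolded J_def]
    proof (induction rule: T.span_induct)
      case (step x)
      then obtain i where "i \<in> I" "x = \<iota> i" by auto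
      then show ?case unfolding J_def using Imul
        by (metis T.span_base image_eqI imul)
    next
      show "T.subspace {x. \<iota> a0 * x \<in> J}" unfolding T.subspace_def J_def
        by (auto simp: distrib_left T.span_zero T.span_add T.span_scale mT1 mT2)
    qed
    have Jr0: "x * \<iota> a0 \<in> J" if "x \<in> J" for a0 x
      using that[unfolded J_def]
    proof (induction rule: T.span_induct)
      case (step x)
      then obtain i where "i \<in> I" "x = \<iota> i" by auto
      then show ?case unfolding J_def using Imul
        by (metis T.span_base image_eqI imul)
    next
      show "T.subspace {x. x * \<iota> a0 \<in> J}" unfolding T.subspace_def J_def
        by (auto simp: distrib_right T.span_zero T.span_add T.span_scale mT1 mT2)
    qed
    have Jl: "a * x \<in> J" if "x \<in> J" for a x
    proof -
      have "a \<in> T.span (range \<iota>)" using ispan by simp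
      then show ?thesis
      proof (induction rule: T.span_induct)
        case (step a)
        then show ?case using Jl0 that by auto
      next
        show "T.subspace {a. a * x \<in> J}" unfolding T.subspace_def J_def
          by (auto simp: distrib_right T.span_zero T.span_add T.span_scale mT1 mT2)
      qed
    qed
    have Jr: "x * a \<in> J" if "x \<in> J" for a x
    proof -
      have "a \<in> T.span (range \<iota>)" using ispan by simp
      then show ?thesis
      proof (induction rule: T.span_induct)
        case (step a)
        then show ?case using Jr0 that by auto
      next
        show "T.subspace {a. x * a \<in> J}" unfolding T.subspace_def J_def
          by (auto simp: distrib_left T.span_zero T.span_add T.span_scale mT1 mT2)
      qed
    qed
    have Jideal: "two_sided_ideal J"
      unfolding two_sided_ideal_def using Jl Jr
      by (auto simp: J_def T.span_zero T.span_add T.span_neg)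
    obtain i where i: "i \<in> I" "i \<noteq> 0" using I(2) I0 by auto
    have "A.independent {i}" using i by simp
    then have "T.independent {\<iota> i}" using iind by fastforce
    then have "\<iota> i \<noteq> 0" by auto
    moreover have "\<iota> i \<in> J" unfolding J_def using i by (simp add: T.span_base)
    ultimately have "J \<noteq> {0}" by auto
    then obtain B where B: "finite B" "T.span (B \<union> J) = UNIV"
      using Tid Jideal unfolding fin_codim_def by blast
    obtain C where C: "C \<subseteq> I" "A.independent C" "I \<subseteq> A.span C"
      using A.maximal_independent_subset by blast
    show ?thesis
    proof (rule ccontr)
      assume nf: "\<not> fin_codim sA I"
      have nsp: "A.span (F \<union> C) \<noteq> UNIV" if "finite F" for F
      proof
        assume eq: "A.span (F \<union> C) = UNIV"
        have "F \<union> C \<subseteq> A.span (F \<union> I)" using C(1) A.span_superset by blast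
        then have "A.span (F \<union> C) \<subseteq> A.span (F \<union> I)" by (rule A.span_le_span)
        then have "A.span (F \<union> I) = UNIV" using eq by auto
        then show False using nf that unfolding fin_codim_def by blast
      qed
      have ex: "\<exists>D. finite D \<and> card D = n \<and> D \<inter> C = {} \<and> A.independent (C \<union> D)" for n
      proof (induction n)
        case 0
        then show ?case using C(2) by (intro exI[of _ "{}"]) auto
      next
        case (Suc n)
        then obtain D where D: "finite D" "card D = n" "D \<inter> C = {}" "A.independent (C \<union> D)"
          by blast
        have "A.span (D \<union> C) \<noteq> UNIV" using nsp D(1) by blast
        then obtain x where x: "x \<notin> A.span (C \<union> D)" by (auto simp: Un_commute)
        have xn: "x \<notin> C \<union> D" using x A.span_superset by blast
        have "A.independent (insert x (C \<union> D))" using A.independent_insertI x D(4) by blast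
        then show ?case using D xn
          by (intro exI[of _ "insert x D"]) auto
      qed
      obtain D where D: "finite D" "card D = card B + 1" "D \<inter> C = {}" "A.independent (C \<union> D)"
        using ex by blast
      have "inj_on \<iota> (C \<union> D) \<and> T.independent (\<iota> ` (C \<union> D))"
        using iind[OF D(4)] .
      then have inj: "inj_on \<iota> (C \<union> D)" and Tind: "T.independent (\<iota> ` (C \<union> D))"
        by simp_all
      have JC: "J \<subseteq> T.span (\<iota> ` C)"
      proof -
        have "\<iota> ` A.span C \<subseteq> T.span (\<iota> ` C)" by (rule L1')
        then have "\<iota> ` I \<subseteq> T.span (\<iota> ` C)" using C(3) by blast
        then show ?thesis unfolding J_def by (rule T.span_le_span)
      qed
      have s1: "T.span (\<iota> ` C) \<subseteq> T.span (B \<union> \<iota> ` C)" by (rule T.span_mono) simp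
      have s2: "B \<subseteq> T.span (B \<union> \<iota> ` C)" using T.span_superset[of "B \<union> \<iota> ` C"] by simp
      have "B \<union> J \<subseteq> T.span (B \<union> \<iota> ` C)"
      proof (rule Un_least)
        show "B \<subseteq> T.span (B \<union> \<iota> ` C)" by (rule s2)
        show "J \<subseteq> T.span (B \<union> \<iota> ` C)" using JC s1 by (rule subset_trans)
      qed
      then have "T.span (B \<union> J) \<subseteq> T.span (B \<union> \<iota> ` C)" by (rule T.span_le_span)
      then have "UNIV \<subseteq> T.span (B \<union> \<iota> ` C)" by (simp only: B(2))
      then have iD: "\<iota> ` D \<subseteq> T.span (B \<union> \<iota> ` C)" by (rule subset_trans[rotated]) (rule subset_UNIV)
      have "finite (\<iota> ` D)" using D(1) by simp
      from T.finite_set_span_support[OF this iD] obtain F where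
        F: "finite F" "F \<subseteq> B \<union> \<iota> ` C" "\<iota> ` D \<subseteq> T.span F"
        by (elim exE conjE)
      define C0 where "C0 = F \<inter> \<iota> ` C"
      have C0f: "finite C0" unfolding C0_def using F(1) by simp
      have FB: "F \<subseteq> B \<union> C0" unfolding C0_def using F(2) by blast
      define S where "S = C0 \<union> \<iota> ` D"
      have "S \<subseteq> \<iota> ` (C \<union> D)" unfolding S_def C0_def by blast
      with Tind have Sind: "T.independent S" by (rule T.independent_mono)
      have sp1: "T.span F \<subseteq> T.span (B \<union> C0)" using FB by (rule T.span_mono)
      have sp2: "B \<union> C0 \<subseteq> T.span (B \<union> C0)" by (rule T.span_superset)
      have Ssp: "S \<subseteq> T.span (B \<union> C0)" unfolding S_def
      proof (rule Un_least)
        show "C0 \<subseteq> T.span (B \<union> C0)" using sp2 by (rule subset_trans[rotated]) (rule Un_upper2)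
        show "\<iota> ` D \<subseteq> T.span (B \<union> C0)" using F(3) sp1 by (rule subset_trans)
      qed
      have fBC: "finite (B \<union> C0)" using B(1) C0f by simp
      have "card S \<le> card (B \<union> C0)"
        using T.independent_span_bound[OF fBC Sind Ssp] by (rule conjunct2)
      also have "\<dots> \<le> card B + card C0" by (rule card_Un_le)
      finally have le: "card S \<le> card B + card C0" .
      have "\<iota> ` (C \<inter> D) = \<iota> ` C \<inter> \<iota> ` D"
        by (rule inj_on_image_Int[OF inj]) simp_all
      then have "\<iota> ` C \<inter> \<iota> ` D = {}" using D(3) by (simp add: Int_commute)
      then have disj: "C0 \<inter> \<iota> ` D = {}" unfolding C0_def by blast
      have "D \<subseteq> C \<union> D" by simp
      have cD: "card (\<iota> ` D) = card D"
        by (rule card_image[OF inj_on_subset[OF inj \<open>D \<subseteq> C \<union> D\<close>]])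
      have fiD: "finite (\<iota> ` D)" using D(1) by simp
      have "card S = card C0 + card (\<iota> ` D)"
        unfolding S_def by (rule card_Un_disjoint[OF C0f fiD disj])
      then show False using le cD D(2) by simp
    qed
  qed
  show ?thesis unfolding just_infinite_def
  proof (intro conjI allI impI)
    fix I :: "'a set" assume "two_sided_ideal I \<and> I \<noteq> {0}"
    then show "fin_codim sA I" using codim by simp
  qed (fact assms(2), fact nfA)
qed

end
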